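(* Let $k\ge 2$ be an integer such that the trinomial $T_k(x)=x^k+x+1$ is primitive over $\mathbb{F}_2$, and let $M_k$ be the binary cyclic word defined in the context. Then $\operatorname{cBWT}(M_k)=1\,(0011)^{2^{k-2}-1}\,010$.
   Context: Define $F:\{0,1\}^k\to\{0,1\}^k$ by $F(x_0,\dots,x_{k-1})=(x_1,\dots,x_{k-1},x_0\oplus x_1)$ (the Fibonacci-form linear-feedback shift register of the recurrence $s_{t+k}=s_{t+1}\oplus s_t$ induced by $T_k$). Define $F'$ to agree with $F$ except that $F'(0^k)=0^{k-1}1$ and $F'(10^{k-1})=0^k$ (the successors of the conjugate pair $0^k,10^{k-1}$ are swapped). Since $T_k$ is primitive, $F'$ is a single cycle on all $2^k$ states. Choose any state $x_0$, set $x_{t+1}=F'(x_t)$, and let $w$ be the cyclic binary word of length $2^k$ with $w[t]$ equal to the first coordinate of $x_t$ ($w$ is a binary de Bruijn cycle of order $k$: every word of $\{0,1\}^k$ occurs exactly once as a cyclic window). $M_k$ is the cyclic word obtained from $w$ by reversing it and then complementing every bit ($0\leftrightarrow1$). For a word $u$ of length $n$, $\operatorname{cBWT}(u)$ is the last column of the $n\times n$ matrix whose rows are the $n$ cyclic rotations of $u$ sorted lexicographically (with $0<1$); it depends only on the cycle. *)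

theory Defs
  imports Main "HOL-Library.Z2" "HOL-Library.List_Lexorder"
    "HOL-Computational_Algebra.Polynomial" "HOL-Computational_Algebra.Factorial_Ring"
begin

definition poly_order :: "bit poly \<Rightarrow> nat" where
  "poly_order p = (LEAST n. 0 < n \<and> p dvd (monom 1 n - 1))"

definition primitive_F2 :: "bit poly \<Rightarrow> bool" where
  "primitive_F2 p \<longleftrightarrow> irreducible p \<and> poly p 0 \<noteq> 0 \<and> poly_order p = 2 ^ degree p - 1"

definition trinomial :: "nat \<Rightarrow> bit poly" where
  "trinomial k = monom 1 k + monom 1 1 + 1"

text \<open>States are bit lists of length k (False = 0, True = 1).\<close>

definition lfsr_F :: "bool list \<Rightarrow> bool list" where
  "lfsr_F x = tl x @ [x ! 0 \<noteq> x ! 1]"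

definition lfsr_F' :: "nat \<Rightarrow> bool list \<Rightarrow> bool list" where
  "lfsr_F' k x =
     (if x = replicate k False then replicate (k - 1) False @ [True]
      else if x = True # replicate (k - 1) False then replicate k False
      else lfsr_F x)"

definition dB_word :: "nat \<Rightarrow> bool list \<Rightarrow> bool list" where
  "dB_word k x0 = map (\<lambda>t. hd ((lfsr_F' k ^^ t) x0)) [0..<2 ^ k]"

definition M_word :: "nat \<Rightarrow> bool list \<Rightarrow> bool list" where
  "M_word k x0 = map Not (rev (dB_word k x0))"

definition cBWT :: "bool list \<Rightarrow> bool list" where
  "cBWT u = map last (sort (map (\<lambda>i. rotate i u) [0..<length u]))"

end

theory Submission
  imports Defs "HOL-Number_Theory.Cong"
begin


definition act :: "bit poly \<Rightarrow> (nat \<Rightarrow> bit) \<Rightarrow> nat \<Rightarrow> bit" where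
  "act q s t = (\<Sum>i\<le>degree q. coeff q i * s (t + i))"

lemma act_bound: "degree q < n \<Longrightarrow> act q s t = (\<Sum>i<n. coeff q i * s (t + i))"
  unfolding act_def
  by (rule sum.mono_neutral_left) (auto simp: coeff_eq_0)

lemma act_zero_fun: "act q (\<lambda>_. 0) t = 0"
  by (simp add: act_def)

lemma act_add: "act (p + q) s t = act p s t + act q s t"
proof -
  let ?n = "Suc (max (degree p) (degree q))"
  have h: "degree (p + q) < ?n" using degree_add_le_max[of p q] by simp
  have h1: "degree p < ?n" "degree q < ?n" by auto
  have "act (p + q) s t = (\<Sum>i<?n. coeff (p + q) i * s (t + i))" using h by (rule act_bound)
  also have "\<dots> = (\<Sum>i<?n. coeff p i * s (t + i)) + (\<Sum>i<?n. coeff q i * s (t + i))"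
    by (simp only: coeff_add distrib_right sum.distrib)
  also have "\<dots> = act p s t + act q s t" by (simp only: act_bound[OF h1(1)] act_bound[OF h1(2)])
  finally show ?thesis .
qed

lemma act_diff: "act (p - q) s t = act p s t - act q s t"
proof -
  let ?n = "Suc (max (degree p) (degree q))"
  have h: "degree (p - q) < ?n" using degree_diff_le_max[of p q] by simp
  have h1: "degree p < ?n" "degree q < ?n" by auto
  have "act (p - q) s t = (\<Sum>i<?n. coeff (p - q) i * s (t + i))" using h by (rule act_bound)
  also have "\<dots> = (\<Sum>i<?n. coeff p i * s (t + i)) - (\<Sum>i<?n. coeff q i * s (t + i))"
    by (simp only: coeff_diff left_diff_distrib sum_subtractf)
  also have "\<dots> = act p s t - act q s t" by (simp only: act_bound[OF h1(1)] act_bound[OF h1(2)])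
  finally show ?thesis .
qed

lemma act_smult: "act (smult c p) s t = c * act p s t"
proof -
  have h: "degree (smult c p) < Suc (degree p)" using degree_smult_le[of c p] by simp
  have "act (smult c p) s t = (\<Sum>i<Suc (degree p). coeff (smult c p) i * s (t + i))"
    using h by (rule act_bound)
  also have "\<dots> = c * (\<Sum>i<Suc (degree p). coeff p i * s (t + i))"
    by (simp only: coeff_smult mult.assoc sum_distrib_left)
  also have "\<dots> = c * act p s t" by (simp only: act_bound[of p "Suc (degree p)"] lessI)
  finally show ?thesis .
qed

lemma act_pCons: "act (pCons c p) s t = c * s t + act p s (Suc t)"
proof -
  have "degree (pCons c p) < Suc (Suc (degree p))" using degree_pCons_le[of c p] by simp
  then have "act (pCons c p) s t = (\<Sum>i<Suc (Suc (degree p)). coeff (pCons c p) i * s (t + i))"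
    by (rule act_bound)
  also have "\<dots> = c * s t + (\<Sum>i<Suc (degree p). coeff p i * s (Suc t + i))"
    by (simp only: sum.lessThan_Suc_shift coeff_pCons_0 coeff_pCons_Suc add_0_right add_Suc_shift add_Suc_right)
  also have "\<dots> = c * s t + act p s (Suc t)"
    by (subst act_bound[of p "Suc (degree p)"]) simp_all
  finally show ?thesis .
qed

lemma act_mult: "act (a * q) s t = act a (act q s) t"
proof (induction a arbitrary: t rule: pCons_induct)
  case 0
  then show ?case by (simp add: act_def)
next
  case (pCons c a)
  have "act (pCons c a * q) s t = act (smult c q + pCons 0 (a * q)) s t" by simp
  also have "\<dots> = c * act q s t + act (a * q) s (Suc t)"
    by (simp add: act_add act_smult act_pCons)
  also have "\<dots> = act (pCons c a) (act q s) t"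
    by (simp add: pCons.IH act_pCons)
  finally show ?case .
qed

lemma act_one: "act 1 s t = s t"
  by (simp add: act_def)

lemma act_monom: "act (monom c n) s t = c * s (t + n)"
proof (induction n arbitrary: t)
  case 0
  have "act (monom c 0) s t = c * s t + act 0 s (Suc t)" by (simp only: monom_0 act_pCons)
  then show ?case by (simp add: act_def)
next
  case (Suc n)
  then show ?case by (simp add: monom_Suc act_pCons)
qed

lemma bit_add_self: "(a::bit) + a = 0"
  by (cases a) simp_all

lemma degree_trinomial: "k \<ge> 2 \<Longrightarrow> degree (trinomial k) = k"
proof -
  assume k: "k \<ge> 2"
  have d: "degree (monom (1::bit) k + monom 1 1) = k"
    using k by (subst degree_add_eq_left) (auto simp: degree_monom_eq)
  show ?thesis unfolding trinomial_def using k d by (subst degree_add_eq_left) auto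
qed

lemma ann_dvd:
  fixes s :: "nat \<Rightarrow> bit" and p :: "bit poly"
  assumes irr: "irreducible p" and ap: "\<And>t. act p s t = 0"
    and aq: "\<And>t. act r s t = 0" and nz: "s j \<noteq> 0"
  shows "p dvd r"
proof -
  define A where "A = {q. \<forall>t. act q s t = 0}"
  have Amult: "a * q \<in> A" if "q \<in> A" for a q
  proof -
    have "act q s = (\<lambda>_. 0)" using that by (auto simp: A_def)
    then show ?thesis by (simp add: A_def act_mult act_zero_fun)
  qed
  have pA: "p \<in> A" "p \<noteq> 0" using ap irr by (auto simp: A_def)
  define d where "d = (LEAST d. \<exists>q. q \<in> A \<and> q \<noteq> 0 \<and> degree q = d)"
  have "\<exists>q. q \<in> A \<and> q \<noteq> 0 \<and> degree q = d"
    unfolding d_def by (rule LeastI_ex) (use pA in blast)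
  then obtain q where q: "q \<in> A" "q \<noteq> 0" "degree q = d" by blast
  have qmin: "d \<le> degree q'" if "q' \<in> A" "q' \<noteq> 0" for q'
    unfolding d_def by (rule Least_le) (use that in blast)
  have qdvd: "q dvd a" if "a \<in> A" for a
  proof -
    have "a mod q = a - a div q * q" by (simp add: mod_div_mult_eq[symmetric] algebra_simps)
    then have "a mod q \<in> A" using that Amult[OF q(1), of "a div q"]
      by (simp add: A_def act_diff)
    then have "a mod q = 0"
      using qmin[of "a mod q"] degree_mod_less[OF q(2), of a] q(3) by force
    then show ?thesis by (simp add: mod_eq_0_iff_dvd)
  qed
  obtain u where pu: "p = q * u" using qdvd[OF pA(1)] by blast
  have "is_unit q \<or> is_unit u" using irreducibleD[OF irr pu] .
  then show ?thesis
  proof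
    assume "is_unit q"
    then obtain q' where "1 = q * q'" by blast
    then have "(1::bit poly) \<in> A" using Amult[OF q(1), of q'] by (simp add: mult.commute)
    then have False using nz by (simp add: A_def act_one)
    then show ?thesis ..
  next
    assume "is_unit u"
    then obtain u' where "1 = u * u'" by blast
    then have "q = p * u'" using pu by (metis mult.assoc mult_1_right)
    then have "p dvd q" by simp
    moreover have "q dvd r" using qdvd aq by (simp add: A_def)
    ultimately show ?thesis by (rule dvd_trans)
  qed
qed




lemma shift_len:
  assumes G: "\<And>y. length y = k \<Longrightarrow> G y = tl y @ [g y]" and x: "length x = k" and k: "k > 0"
  shows "length ((G^^t) x) = k"
proof (induction t)
  case 0 then show ?case using x by simp
next
  case (Suc t) then show ?case using G[OF Suc] k by simp
qed

lemma shift_nth: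
  assumes G: "\<And>y. length y = k \<Longrightarrow> G y = tl y @ [g y]" and x: "length x = k" and k: "k > 0"
  shows "j < k \<Longrightarrow> (G^^t) x ! j = hd ((G^^(t+j)) x)"
proof (induction j arbitrary: t)
  case 0
  have "length ((G^^t) x) = k" by (rule shift_len[OF G x k])
  then show ?case using k by (cases "(G^^t) x") auto
next
  case (Suc j)
  have l: "length ((G^^t) x) = k" by (rule shift_len[OF G x k])
  have "(G^^(Suc t)) x = tl ((G^^t) x) @ [g ((G^^t) x)]" using G[OF l] by simp
  then have "(G^^(Suc t)) x ! j = (G^^t) x ! Suc j"
  proof -
    have "j < length (tl ((G^^t) x))" using Suc.prems l by simp
    then show ?thesis using \<open>(G^^(Suc t)) x = _\<close> by (simp add: nth_append nth_tl)
  qed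
  moreover have "(G^^(Suc t)) x ! j = hd ((G^^(Suc t + j)) x)"
  proof -
    have "j < k" using Suc.prems by simp
    from Suc.IH[OF this, of "Suc t"] show ?thesis .
  qed
  ultimately show ?case by simp
qed

lemma shift_next:
  assumes G: "\<And>y. length y = k \<Longrightarrow> G y = tl y @ [g y]" and x: "length x = k" and k: "k > 0"
  shows "hd ((G^^(t+k)) x) = g ((G^^t) x)"
proof -
  have l: "length ((G^^t) x) = k" by (rule shift_len[OF G x k])
  have "(G^^(Suc t)) x ! (k - 1) = hd ((G^^(Suc t + (k - 1))) x)"
  proof -
    have "k - 1 < k" using k by simp
    from shift_nth[OF G x k this, of "Suc t"] show ?thesis by simp
  qed
  moreover have "(G^^(Suc t)) x = tl ((G^^t) x) @ [g ((G^^t) x)]" using G[OF l] by simp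
  ultimately show ?thesis using l k by (simp add: nth_append)
qed

lemma F_shift: "lfsr_F y = tl y @ [y ! 0 \<noteq> y ! 1]"
  by (simp add: lfsr_F_def)

lemma F_period:
  assumes k: "k \<ge> 2" and prim: "primitive_F2 (trinomial k)"
    and y: "length y = k" "y \<noteq> replicate k False" and n: "0 < n" "(lfsr_F^^n) y = y"
  shows "2^k - 1 \<le> n"
proof -
  define u where "u t = hd ((lfsr_F^^t) y)" for t
  define s :: "nat \<Rightarrow> bit" where "s t = (if u t then 1 else 0)" for t
  have G: "\<And>y. length y = k \<Longrightarrow> lfsr_F y = tl y @ [(\<lambda>y. y ! 0 \<noteq> y ! 1) y]" by (simp add: F_shift)
  have k0: "k > 0" using k by simp
  have nth: "(lfsr_F^^t) y ! j = u (t + j)" if "j < k" for t j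
    unfolding u_def by (rule shift_nth[OF G y(1) k0 that])
  have rec: "u (t + k) = (u t \<noteq> u (t + 1))" for t
  proof -
    have "u (t + k) = ((lfsr_F^^t) y ! 0 \<noteq> (lfsr_F^^t) y ! 1)"
      unfolding u_def by (rule shift_next[OF G y(1) k0])
    then show ?thesis using nth[of 0 t] nth[of 1 t] k by simp
  qed
  have per: "u (t + n) = u t" for t
    unfolding u_def by (simp add: funpow_add n(2))
  have a1: "act (trinomial k) s t = 0" for t
  proof -
    have "act (trinomial k) s t = s (t+k) + s (t+1) + s t"
      by (simp add: trinomial_def act_add act_monom act_one)
    then show ?thesis using rec[of t]
      by (cases "u t"; cases "u (t+1)") (simp_all add: s_def bit_add_self)
  qed
  have a2: "act (monom 1 n - 1) s t = 0" for t
    unfolding act_diff act_monom act_one s_def using per[of t] by simp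
  have "\<exists>j<k. y ! j"
  proof (rule ccontr)
    assume "\<not> (\<exists>j<k. y ! j)"
    then have "y = replicate k False" using y(1) by (intro nth_equalityI) auto
    then show False using y(2) by simp
  qed
  then obtain j where j: "j < k" "y ! j" by blast
  have "u j" using nth[of j 0] j by simp
  then have sj: "s j \<noteq> 0" by (simp add: s_def)
  have irr: "irreducible (trinomial k)" using prim by (simp add: primitive_F2_def)
  have "trinomial k dvd monom 1 n - 1" by (rule ann_dvd[OF irr a1 a2 sj])
  then have "poly_order (trinomial k) \<le> n"
    unfolding poly_order_def by (intro Least_le) (use n in simp)
  then show ?thesis using prim degree_trinomial[OF k] by (simp add: primitive_F2_def)
qed




lemma zero_iff: "length y = k \<Longrightarrow> (y = replicate k False) \<longleftrightarrow> True \<notin> set y"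
proof
  assume "length y = k" "y = replicate k False" then show "True \<notin> set y" by simp
next
  assume "length y = k" "True \<notin> set y"
  then show "y = replicate k False" by (intro replicate_eqI) auto
qed

lemma F_len: "length y = k \<Longrightarrow> k \<ge> 2 \<Longrightarrow> length (lfsr_F y) = k"
  by (simp add: lfsr_F_def)

lemma F_nz: assumes "length y = k" "k \<ge> 2" "True \<in> set y" shows "True \<in> set (lfsr_F y)"
proof (cases "True \<in> set (tl y)")
  case True then show ?thesis by (simp add: lfsr_F_def)
next
  case False
  obtain a r where y: "y = a # r" using assms by (cases y) auto
  have "r \<noteq> []" using assms y by auto
  then have "r ! 0 = False" using False y by (metis (full_types) hd_conv_nth list.sel(3) list.set_sel(1))
  moreover have "a = True" using False assms(3) y by auto
  ultimately show ?thesis using y by (simp add: lfsr_F_def)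
qed

lemma F_inj: assumes "length y = k" "length y' = k" "k \<ge> 2" "lfsr_F y = lfsr_F y'" shows "y = y'"
proof -
  have t: "tl y = tl y'" and b: "(y ! 0 \<noteq> y ! 1) = (y' ! 0 \<noteq> y' ! 1)"
    using assms by (auto simp: lfsr_F_def)
  obtain a r where y: "y = a # r" using assms by (cases y) auto
  obtain a' r' where y': "y' = a' # r'" using assms by (cases y') auto
  have "r = r'" using t y y' by simp
  moreover have "r \<noteq> []" using assms y by auto
  ultimately have "a = a'" using b y y' by (cases r) auto
  then show ?thesis using \<open>r = r'\<close> y y' by simp
qed

lemma F'_shift:
  assumes "length y = k" "k \<ge> 2"
  shows "lfsr_F' k y = tl y @ [last (lfsr_F' k y)]"
proof -
  obtain k' where k': "k = Suc k'" using assms by (cases k) auto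
  show ?thesis
  proof (cases "y = replicate k False")
    case True then show ?thesis unfolding lfsr_F'_def k' by simp
  next
    case f1: False
    show ?thesis
    proof (cases "y = True # replicate (k-1) False")
      case True then show ?thesis using f1 unfolding lfsr_F'_def k'
        by (simp add: replicate_append_same)
    next
      case False then show ?thesis using f1 unfolding lfsr_F'_def lfsr_F_def by simp
    qed
  qed
qed

lemma F'_len: assumes "length y = k" "k \<ge> 2" shows "length (lfsr_F' k y) = k"
proof -
  have "length (tl y @ [last (lfsr_F' k y)]) = k" using assms by auto
  then show ?thesis using F'_shift[OF assms] by metis
qed

locale lfsr_ctx =
  fixes k :: nat
  assumes k: "k \<ge> 2" and prim: "primitive_F2 (trinomial k)"
begin

abbreviation "F \<equiv> lfsr_F"
abbreviation "F' \<equiv> lfsr_F' k"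
definition "N = (2::nat)^k"
definition "z = replicate k False"
definition "e = True # replicate (k-1) False"
definition "u0 = replicate (k-1) False @ [True]"

lemma N4: "N \<ge> 4"
proof -
  have "(2::nat)^2 \<le> 2^k" using k by (intro power_increasing) auto
  then show ?thesis by (simp add: N_def)
qed

lemma u0_props: "length u0 = k" "True \<in> set u0"
  using k by (auto simp: u0_def)

lemma e_props: "length e = k" "True \<in> set e"
  using k by (auto simp: e_def)

lemma Fe: "F e = u0"
  using k by (simp add: e_def u0_def lfsr_F_def)

lemma Fpow_props: "length ((F^^j) u0) = k \<and> True \<in> set ((F^^j) u0)"
  by (induction j) (use u0_props k F_len F_nz in auto)

lemma period: "length y = k \<Longrightarrow> True \<in> set y \<Longrightarrow> 0 < n \<Longrightarrow> (F^^n) y = y \<Longrightarrow> N - 1 \<le> n"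
  using F_period[OF k prim, of y n] zero_iff[of y k] by (simp add: N_def)

lemma Fpow_distinct: assumes "i < j" "j < N - 1" shows "(F^^i) u0 \<noteq> (F^^j) u0"
proof
  assume eq: "(F^^i) u0 = (F^^j) u0"
  have "(F^^j) u0 = (F^^((j-i)+i)) u0" using assms by simp
  also have "\<dots> = (F^^(j-i)) ((F^^i) u0)" by (simp only: funpow_add comp_def)
  finally have "(F^^(j-i)) ((F^^i) u0) = (F^^j) u0" by simp
  then have "(F^^(j-i)) ((F^^i) u0) = (F^^i) u0" using eq by simp
  then have "N - 1 \<le> j - i" using period[of "(F^^i) u0" "j-i"] Fpow_props[of i] assms by auto
  then show False using assms by simp
qed

lemma card_nz: "card {y. length y = k \<and> True \<in> set y} = N - 1"
proof -
  have "{y. length y = k \<and> True \<in> set y} = {y. set y \<subseteq> UNIV \<and> length y = k} - {z}"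
    using zero_iff by (auto simp: z_def)
  moreover have "card {y::bool list. set y \<subseteq> UNIV \<and> length y = k} = N"
    using card_lists_length_eq[of "UNIV::bool set" k] by (simp add: N_def)
  moreover have "z \<in> {y::bool list. set y \<subseteq> UNIV \<and> length y = k}" by (simp add: z_def)
  moreover have "finite {y::bool list. set y \<subseteq> UNIV \<and> length y = k}"
    using finite_lists_length_eq[of "UNIV::bool set" k] by simp
  ultimately show ?thesis by (simp add: card_Diff_singleton)
qed

lemma Fpow_cover: assumes "length y = k" "True \<in> set y" shows "\<exists>j<N-1. (F^^j) u0 = y"
proof -
  let ?S = "{y. length y = k \<and> True \<in> set y}"
  have sub: "(\<lambda>j. (F^^j) u0) ` {..<N-1} \<subseteq> ?S" using Fpow_props by auto
  have inj: "inj_on (\<lambda>j. (F^^j) u0) {..<N-1}"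
    unfolding inj_on_def by (metis Fpow_distinct lessThan_iff linorder_neqE_nat)
  have "card ((\<lambda>j. (F^^j) u0) ` {..<N-1}) = N - 1" using card_image[OF inj] by simp
  moreover have "finite ?S"
    by (rule finite_subset[OF _ finite_lists_length_eq[of "UNIV::bool set" k]]) auto
  ultimately have "(\<lambda>j. (F^^j) u0) ` {..<N-1} = ?S"
    using sub card_nz by (intro card_subset_eq) auto
  moreover have "y \<in> ?S" using assms by blast
  ultimately have "y \<in> (\<lambda>j. (F^^j) u0) ` {..<N-1}" by blast
  then show ?thesis by auto
qed

lemma Fpow_e: "(F^^(N-2)) u0 = e"
proof -
  obtain a where a: "a < N - 1" "(F^^a) u0 = e" using Fpow_cover e_props by blast
  have "(F^^(Suc a)) u0 = u0" using a Fe by simp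
  then have "N - 1 \<le> Suc a" using period u0_props by blast
  then have "a = N - 2" using a by simp
  then show ?thesis using a by simp
qed

lemma F'_eq_F: "y \<noteq> replicate k False \<Longrightarrow> y \<noteq> e \<Longrightarrow> F' y = F y"
  by (simp add: lfsr_F'_def e_def)

lemma F'pow_F: "j \<le> N - 2 \<Longrightarrow> (F'^^j) u0 = (F^^j) u0"
proof (induction j)
  case 0 then show ?case by simp
next
  case (Suc j)
  have ne: "(F^^j) u0 \<noteq> e" using Fpow_distinct[of j "N-2"] Fpow_e Suc.prems N4 by simp
  have nz: "(F^^j) u0 \<noteq> replicate k False" using Fpow_props[of j] by auto
  show ?case using Suc ne nz F'_eq_F by simp
qed

lemma F'z: "F' (replicate k False) = u0"
  by (simp add: lfsr_F'_def u0_def)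

lemma F'e: "F' e = replicate k False"
proof -
  have r: "replicate k False = False # replicate (k-1) False" using k by (cases k) auto
  show ?thesis by (simp add: lfsr_F'_def e_def r)
qed

lemma F'pow_N1: "(F'^^(N-1)) u0 = replicate k False"
proof -
  have "N - 1 = Suc (N - 2)" using N4 by simp
  then show ?thesis using F'pow_F[of "N-2"] Fpow_e F'e by simp
qed

lemma F'pow_N: "(F'^^N) u0 = u0"
proof -
  have "N = Suc (N - 1)" using N4 by simp
  then show ?thesis using F'pow_N1 F'z by (metis funpow.simps(2) comp_apply)
qed

lemma F'pow_cover: "length (y::bool list) = k \<Longrightarrow> \<exists>b<N. (F'^^b) u0 = y"
proof (cases "True \<in> set y")
  case True
  assume "length y = k"
  then obtain j where "j < N - 1" "(F^^j) u0 = y" using Fpow_cover True by blast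
  then show ?thesis using F'pow_F[of j] by (intro exI[of _ j]) auto
next
  case False
  assume "length y = k"
  then have "y = replicate k False" using False zero_iff by blast
  then show ?thesis using F'pow_N1 N4 by (intro exI[of _ "N-1"]) auto
qed

lemma orbit:
  assumes x0: "length x0 = k"
  shows "(F'^^N) x0 = x0" and "\<And>y. length y = k \<Longrightarrow> \<exists>m<N. (F'^^m) x0 = y"
proof -
  obtain a where a: "a < N" "(F'^^a) u0 = x0" using F'pow_cover[OF x0] by blast
  have x0a: "(F'^^m) x0 = (F'^^(m + a)) u0" for m using a by (simp add: funpow_add)
  show "(F'^^N) x0 = x0"
    using x0a[of N] a F'pow_N by (simp add: funpow_add add.commute)
  fix y :: "bool list" assume "length y = k"
  then obtain b where b: "b < N" "(F'^^b) u0 = y" using F'pow_cover by blast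
  define m where "m = (b + N - a) mod N"
  have "m < N" using N4 by (simp add: m_def)
  have "(m + a) mod N = b"
  proof -
    have "(m + a) mod N = (b + N - a + a) mod N" unfolding m_def by (simp add: mod_add_left_eq)
    also have "b + N - a + a = b + N" using a by simp
    finally show ?thesis using b by simp
  qed
  then have "(F'^^m) x0 = y"
    using x0a[of m] funpow_mod_eq[OF F'pow_N, of "m + a"] b by simp
  then show "\<exists>m<N. (F'^^m) x0 = y" using \<open>m < N\<close> by blast
qed

end



fun bl :: "nat \<Rightarrow> bool list list" where
  "bl 0 = [[]]"
| "bl (Suc k) = map (Cons False) (bl k) @ map (Cons True) (bl k)"

lemma bl_length: "length (bl k) = 2^k"
  by (induction k) auto

lemma bl_set: "set (bl k) = {v. length v = k}"
proof (induction k)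
  case 0 then show ?case by auto
next
  case (Suc k)
  show ?case
  proof (intro set_eqI iffI)
    fix v :: "bool list" assume "v \<in> set (bl (Suc k))" then show "v \<in> {v. length v = Suc k}" using Suc by auto
  next
    fix v :: "bool list" assume "v \<in> {v. length v = Suc k}"
    then obtain b r where "v = b # r" "length r = k" by (cases v) auto
    then show "v \<in> set (bl (Suc k))" using Suc by (cases b) auto
  qed
qed

lemma bl_sorted: "sorted_wrt (<) (bl k)"
proof (induction k)
  case 0 then show ?case by simp
next
  case (Suc k)
  then show ?case by (auto simp: sorted_wrt_append sorted_wrt_map)
qed

lemma bl_distinct: "distinct (bl k)"
  by (induction k) (auto simp: distinct_map)

lemma bl_last2: "\<exists>B. bl (Suc k) = B @ [replicate k True @ [False], replicate (Suc k) True]"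
proof (induction k)
  case 0 then show ?case by simp
next
  case (Suc k)
  then obtain B where B: "bl (Suc k) = B @ [replicate k True @ [False], replicate (Suc k) True]" by blast
  have e: "bl (Suc (Suc k)) = map (Cons False) (bl (Suc k)) @ map (Cons True) (bl (Suc k))"
    by (rule bl.simps(2))
  show ?case
    by (rule exI[of _ "map (Cons False) (bl (Suc k)) @ map (Cons True) B"]) (simp del: bl.simps add: e B)
qed

definition P :: "bool list \<Rightarrow> bool" where "P v \<longleftrightarrow> (last v \<longleftrightarrow> last (butlast v))"

lemma P_Cons: "length v \<ge> 2 \<Longrightarrow> P (b # v) = P v"
proof -
  assume l: "length v \<ge> 2"
  obtain u y where v: "v = u @ [y]" by (cases v rule: rev_cases) (use l in auto)
  obtain r x where u: "u = r @ [x]" by (cases u rule: rev_cases) (use l v in auto)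
  have "v = r @ [x, y]" using u v by simp
  then show ?thesis by (simp add: P_def butlast_append)
qed

lemma bl_P: "map P (bl (Suc (Suc k))) = concat (replicate (2^k) [True, False, False, True])"
proof (induction k)
  case 0 then show ?case by (simp add: P_def)
next
  case (Suc k)
  have l: "\<And>v. v \<in> set (bl (Suc (Suc k))) \<Longrightarrow> length v \<ge> 2" by (simp only: bl_set mem_Collect_eq)
  have "map P (bl (Suc (Suc (Suc k)))) = map P (bl (Suc (Suc k))) @ map P (bl (Suc (Suc k)))"
    using l by (simp add: comp_def P_Cons cong: map_cong)
  also have "\<dots> = concat (replicate (2^Suc k) [True, False, False, True])"
    by (simp del: bl.simps add: Suc.IH mult_2 replicate_add)
  finally show ?case .
qed

lemma take_less: "length a = length b \<Longrightarrow> take k a < take k b \<Longrightarrow> a < (b::bool list)"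
proof (induction a arbitrary: b k)
  case Nil then show ?case by simp
next
  case (Cons x a)
  obtain y b' where b: "b = y # b'" using Cons.prems by (cases b) auto
  show ?case
  proof (cases k)
    case 0 then show ?thesis using Cons.prems by simp
  next
    case (Suc k')
    then show ?thesis using Cons b by auto
  qed
qed

lemma cong_cancel: "(a + r) mod (N::nat) = 0 \<Longrightarrow> (b + r) mod N = 0 \<Longrightarrow> a mod N = b mod N"
  using cong_add_rcancel_nat[of a r b N] by (simp add: cong_def)

lemma final_list:
  "[True] @ concat (replicate n [False, False, True, True]) =
   concat (replicate n [True, False, False, True]) @ [True]"
  by (induction n) auto




context lfsr_ctx
begin

definition phi :: "bool list \<Rightarrow> bool" where "phi v = (\<not> last (F' (rev (map Not v))))"

lemma phi_b: "phi (replicate k True) = False"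
proof -
  have "rev (map Not (replicate k True)) = replicate k False" by simp
  then show ?thesis using F'z by (simp add: phi_def u0_def)
qed

lemma phi_a: "phi (replicate (k-1) True @ [False]) = True"
proof -
  have "rev (map Not (replicate (k-1) True @ [False])) = e" by (simp add: e_def)
  then show ?thesis using F'e k by (simp add: phi_def)
qed

lemma phi_P:
  assumes v: "length v = k" "v \<noteq> replicate k True" "v \<noteq> replicate (k-1) True @ [False]"
  shows "phi v = P v"
proof -
  define y where "y = rev (map Not v)"
  have vy: "v = map Not (rev y)" by (simp add: y_def rev_map comp_def)
  have ly: "length y = k" using v by (simp add: y_def)
  have yz: "y \<noteq> replicate k False"
  proof
    assume "y = replicate k False" then have "v = replicate k True" using vy by simp
    then show False using v by simp
  qed
  have ye: "y \<noteq> e"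
  proof
    assume "y = e" then have "v = replicate (k-1) True @ [False]" using vy by (simp add: e_def)
    then show False using v by simp
  qed
  have "F' y = F y" using F'_eq_F[OF yz ye] .
  then have "phi v = (\<not> (y ! 0 \<noteq> y ! 1))" by (simp add: phi_def y_def[symmetric] lfsr_F_def)
  moreover have "y ! 0 = (\<not> v ! (k - 1))" using v k by (simp add: y_def rev_nth)
  moreover have "y ! 1 = (\<not> v ! (k - 2))" using v k
    by (simp add: y_def rev_nth numeral_2_eq_2 Suc_diff_Suc)
  moreover have "last v = v ! (k - 1)" using v k by (subst last_conv_nth) auto
  moreover have "last (butlast v) = v ! (k - 2)"
  proof -
    have b2: "length (butlast v) = k - 1" using v by simp
    have b1: "butlast v \<noteq> []" "length (butlast v) = k - 1"
    proof -
      show "butlast v \<noteq> []"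
      proof
        assume "butlast v = []" then have "length (butlast v) = 0" by simp
        then show False using b2 k by simp
      qed
    qed (rule b2)
    have "last (butlast v) = butlast v ! (k - 1 - 1)" using b1 by (subst last_conv_nth) auto
    also have "k - 1 - 1 = k - 2" by simp
    also have "butlast v ! (k - 2) = v ! (k - 2)" using v k by (intro nth_butlast) simp
    finally show ?thesis .
  qed
  ultimately show ?thesis by (auto simp: P_def)
qed

end

locale lfsr_run = lfsr_ctx +
  fixes x0 :: "bool list"
  assumes x0: "length x0 = k"
begin

definition c :: "nat \<Rightarrow> bool" where "c t = hd ((F'^^t) x0)"
abbreviation "M \<equiv> M_word k x0"

lemma G: "\<And>y. length y = k \<Longrightarrow> F' y = tl y @ [(\<lambda>y. last (F' y)) y]"
  using F'_shift k by blast

lemma k0: "k > 0" using k by simp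

lemma lenX: "length ((F'^^t) x0) = k"
  by (rule shift_len[OF G x0 k0])

lemma Xnth: "j < k \<Longrightarrow> (F'^^t) x0 ! j = c (t + j)"
  unfolding c_def by (rule shift_nth[OF G x0 k0])

lemma Xnext: "c (t + k) = last (F' ((F'^^t) x0))"
  unfolding c_def by (rule shift_next[OF G x0 k0])

lemma cmod: "c (t mod N) = c t"
  unfolding c_def using funpow_mod_eq[OF orbit(1)[OF x0], of t] by simp

lemma N0: "N > 0" using N4 by simp

lemma kN: "k \<le> N"
  unfolding N_def using less_exp[of k] by simp

lemma lenM: "length M = N"
  by (simp add: M_word_def dB_word_def N_def)

lemma M_nth: "p < N \<Longrightarrow> M ! p = (\<not> c (N - 1 - p))"
  by (simp add: M_word_def dB_word_def N_def rev_nth c_def)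

lemma cyc: assumes "(b + q + 1) mod N = 0" shows "c (N - 1 - q mod N) = c b"
proof -
  define p where "p = q mod N"
  define d where "d = q div N"
  have pN: "p < N" using N0 by (simp add: p_def)
  have q: "q = N * d + p" by (simp add: p_def d_def)
  have "N - 1 - p + (q + 1) = N * Suc d" using pN q by (simp add: mult_Suc_right)
  then have "(N - 1 - p + (q + 1)) mod N = 0" by simp
  moreover have "(b + (q + 1)) mod N = 0" using assms by (simp add: add.assoc)
  ultimately have "(N - 1 - p) mod N = b mod N" by (rule cong_cancel)
  then have "c ((N - 1 - p) mod N) = c (b mod N)" by simp
  then show ?thesis by (simp add: cmod p_def)
qed

lemma rot:
  assumes m: "m < N"
  defines "i \<equiv> (2 * N - m - k) mod N"
  shows "j < k \<Longrightarrow> rotate i M ! j = (\<not> c (m + k - 1 - j))"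
    and "last (rotate i M) = (\<not> c (m + k))"
proof -
  have base: "(m + k + i) mod N = 0"
  proof -
    have "(m + k + i) mod N = (m + k + (2 * N - m - k)) mod N"
      unfolding i_def by (simp add: mod_add_right_eq)
    also have "m + k + (2 * N - m - k) = N * 2" using m kN by simp
    finally show ?thesis by simp
  qed
  {
    assume j: "j < k"
    have jN: "j < length M" using j kN lenM by simp
    have "rotate i M ! j = M ! ((i + j) mod N)" using nth_rotate[OF jN] lenM by simp
    also have "\<dots> = (\<not> c (N - 1 - (i + j) mod N))" using N0 by (simp add: M_nth)
    also have "c (N - 1 - (i + j) mod N) = c (m + k - 1 - j)"
    proof (rule cyc)
      have e: "m + k - 1 - j + (i + j) + 1 = m + k + i" using j by arith
      show "(m + k - 1 - j + (i + j) + 1) mod N = 0" unfolding e by (rule base)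
    qed
    finally show "rotate i M ! j = (\<not> c (m + k - 1 - j))" .
  }
  have ne: "rotate i M \<noteq> []" using lenM N0 by auto
  have nN: "N - 1 < length M" using lenM N0 by simp
  have "last (rotate i M) = rotate i M ! (N - 1)" using ne lenM by (simp add: last_conv_nth)
  also have "\<dots> = M ! ((i + (N - 1)) mod N)" using nth_rotate[OF nN] lenM by simp
  also have "\<dots> = (\<not> c (N - 1 - (i + (N - 1)) mod N))" using N0 by (simp add: M_nth)
  also have "c (N - 1 - (i + (N - 1)) mod N) = c (m + k)"
  proof (rule cyc)
    have e: "m + k + (i + (N - 1)) + 1 = (m + k + i) + N" using N0 by arith
    show "(m + k + (i + (N - 1)) + 1) mod N = 0" unfolding e using base by simp
  qed
  finally show "last (rotate i M) = (\<not> c (m + k))" .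
qed

lemma key:
  assumes v: "length v = k"
  shows "\<exists>i<N. take k (rotate i M) = v \<and> last (rotate i M) = phi v"
proof -
  define y where "y = rev (map Not v)"
  have ly: "length y = k" using v by (simp add: y_def)
  obtain m where m: "m < N" "(F'^^m) x0 = y" using orbit(2)[OF x0 ly] by blast
  define i where "i = (2 * N - m - k) mod N"
  have iN: "i < N" using N0 by (simp add: i_def)
  have "take k (rotate i M) = v"
  proof (rule nth_equalityI)
    show "length (take k (rotate i M)) = length v" using v kN lenM by simp
  next
    fix j assume "j < length (take k (rotate i M))"
    then have j: "j < k" using kN lenM by simp
    have "take k (rotate i M) ! j = (\<not> c (m + k - 1 - j))"
      using rot(1)[OF m(1) j] j unfolding i_def by simp
    moreover have "y ! (k - 1 - j) = c (m + k - 1 - j)"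
      using Xnth[of "k - 1 - j" m] m j by simp
    moreover have "y ! (k - 1 - j) = (\<not> v ! j)"
      using v j by (simp add: y_def rev_nth Suc_diff_Suc)
    ultimately show "take k (rotate i M) ! j = v ! j" by simp
  qed
  moreover have "last (rotate i M) = phi v"
    using rot(2)[OF m(1)] Xnext[of m] m unfolding i_def by (simp add: phi_def y_def)
  ultimately show ?thesis using iN by blast
qed

end



context lfsr_ctx
begin

lemma final_eq:
  "map phi (bl k) =
    [True] @ concat (replicate (2 ^ (k - 2) - 1) [False, False, True, True]) @ [False, True, False]"
proof -
  define k' where "k' = k - 2"
  have kk: "k = Suc (Suc k')" using k by (simp add: k'_def)
  define a where "a = replicate (k-1) True @ [False]"
  define b where "b = replicate k True"
  obtain B where B0: "bl (Suc (k-1)) = B @ [replicate (k-1) True @ [False], replicate (Suc (k-1)) True]"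
    using bl_last2 by blast
  have eq: "Suc (k-1) = k" using k by simp
  have B: "bl k = B @ [a, b]" using B0[unfolded eq] unfolding a_def b_def .
  have dB: "a \<notin> set B" "b \<notin> set B" using bl_distinct[of k] B by auto
  have lB: "\<And>v. v \<in> set B \<Longrightarrow> length v = k" using B bl_set[of k] by auto
  have phiB: "map phi B = map P B"
  proof (rule map_cong[OF refl])
    fix v assume v: "v \<in> set B"
    then have "v \<noteq> a" "v \<noteq> b" using dB by auto
    then show "phi v = P v" using phi_P lB[OF v] unfolding a_def b_def by blast
  qed
  have Pa: "P a = False" using k by (simp add: a_def P_def butlast_append)
  have Pb: "P b = True"
  proof -
    have "b = replicate (Suc k') True @ [True]" unfolding b_def kk by (simp add: replicate_append_same)
    then show ?thesis by (simp add: P_def replicate_append_same[symmetric] del: replicate_Suc)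
  qed
  define X where "X = [True, False, False, True]"
  define n :: nat where "n = 2 ^ k' - 1"
  have n2: "2 ^ k' = Suc n" unfolding n_def by simp
  have "map P (bl k) = concat (replicate (2^k') X)" unfolding kk X_def by (rule bl_P)
  also have "\<dots> = concat (replicate n X) @ X" 
  proof -
    have "replicate (Suc n) X = replicate n X @ [X]" by (simp add: replicate_append_same)
    then show ?thesis unfolding n2 by simp
  qed
  finally have "map P B @ [False, True] = (concat (replicate n X) @ [True, False]) @ [False, True]"
    using B Pa Pb by (simp add: X_def)
  then have PB: "map P B = concat (replicate n X) @ [True, False]" by simp
  have "map phi (bl k) = map phi B @ [True, False]"
    using B phi_a phi_b unfolding a_def b_def by simp
  also have "\<dots> = concat (replicate n X) @ [True] @ [False, True, False]"
    using phiB PB by simp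
  also have "\<dots> = [True] @ concat (replicate n [False, False, True, True]) @ [False, True, False]"
    using final_list[of n] unfolding X_def by simp
  finally show ?thesis using kk n_def by simp
qed

end

context lfsr_run
begin

definition idx :: "bool list \<Rightarrow> nat" where
  "idx v = (SOME i. i < N \<and> take k (rotate i M) = v \<and> last (rotate i M) = phi v)"

lemma idx: "length v = k \<Longrightarrow> idx v < N \<and> take k (rotate (idx v) M) = v \<and> last (rotate (idx v) M) = phi v"
  unfolding idx_def by (rule someI_ex) (use key in blast)

lemma cbwt_phi: "cBWT M = map phi (bl k)"
proof -
  let ?ys = "map (\<lambda>v. rotate (idx v) M) (bl k)"
  let ?rots = "map (\<lambda>i. rotate i M) [0..<length M]"
  have setbl: "\<And>v. v \<in> set (bl k) \<Longrightarrow> length v = k" by (simp add: bl_set)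
  have inj: "inj_on idx (set (bl k))"
  proof (rule inj_onI)
    fix v v' assume "v \<in> set (bl k)" "v' \<in> set (bl k)" "idx v = idx v'"
    then show "v = v'" using idx[of v] idx[of v'] setbl by metis
  qed
  have dist: "distinct (map idx (bl k))" using inj bl_distinct by (simp add: distinct_map)
  have sub: "set (map idx (bl k)) \<subseteq> {0..<N}" using idx setbl by auto
  have card: "card (set (map idx (bl k))) = N"
    using distinct_card[OF dist] by (simp add: bl_length N_def)
  have seteq: "set (map idx (bl k)) = set [0..<N]"
    using card_subset_eq[OF _ sub] card by simp
  have m1: "mset (map idx (bl k)) = mset [0..<N]"
    using seteq dist set_eq_iff_mset_eq_distinct[of "map idx (bl k)" "[0..<N]"] by simp
  have ms: "mset ?ys = mset ?rots"
  proof -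
    have "mset ?ys = image_mset (\<lambda>i. rotate i M) (mset (map idx (bl k)))"
      by (simp add: image_mset.compositionality comp_def)
    also have "\<dots> = image_mset (\<lambda>i. rotate i M) (mset [0..<N])" by (simp only: m1)
    also have "\<dots> = mset ?rots" by (simp add: lenM)
    finally show ?thesis .
  qed
  have srt: "sorted ?ys"
  proof -
    have "sorted_wrt (\<lambda>v v'. rotate (idx v) M \<le> rotate (idx v') M) (bl k)"
    proof (rule sorted_wrt_mono_rel[OF _ bl_sorted])
      fix v v' assume vs: "v \<in> set (bl k)" "v' \<in> set (bl k)" and lt: "v < v'"
      have "take k (rotate (idx v) M) < take k (rotate (idx v') M)"
        using idx[OF setbl[OF vs(1)]] idx[OF setbl[OF vs(2)]] lt by simp
      then have "rotate (idx v) M < rotate (idx v') M"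
        using take_less[of "rotate (idx v) M" "rotate (idx v') M" k] by simp
      then show "rotate (idx v) M \<le> rotate (idx v') M" by (rule less_imp_le)
    qed
    then show ?thesis by (simp add: sorted_wrt_map)
  qed
  have "sort ?rots = ?ys" by (rule properties_for_sort[OF ms srt])
  then have "cBWT M = map last ?ys" by (simp add: cBWT_def)
  also have "\<dots> = map phi (bl k)" using idx setbl by simp
  finally show ?thesis .
qed

end

theorem theorem2:
  fixes k :: nat and x0 :: "bool list"
  assumes "k \<ge> 2"
    and "primitive_F2 (trinomial k)"
    and "length x0 = k"
  shows "cBWT (M_word k x0) =
    [True] @ concat (replicate (2 ^ (k - 2) - 1) [False, False, True, True]) @ [False, True, False]"
proof -
  interpret lfsr_run k x0 using assms by unfold_locales
  show ?thesis using cbwt_phi final_eq by simp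
qed


end
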